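(* Let $p$ be a prime and $m\ge 3$, and let $\mathcal{G}$ be the set of all groups isomorphic to either $D_1=\mathbb{Z}_p^m$ or $D_2=\mathbb{Z}_p^{m-2}\times\mathbb{Z}_{p^2}$. Any deterministic algorithm that determines whether a given $G\in\mathcal{G}$ is isomorphic to $D_1$ or to $D_2$ must access the elements of $G$ and its Cayley table at least $\Omega(p^{m-2})=\Omega(|G|/p^2)$ times.
   Context: The element sets of the groups in $\mathcal{G}$ are subsets of a fixed countable set. The algorithm accesses elements of $G$ one at a time and queries the Cayley table on elements it has obtained; each such access counts as one access. *)

theory Defs
  imports "HOL-Algebra.Algebra" "HOL-Computational_Algebra.Primes"
begin

definition D1 :: "nat \<Rightarrow> nat \<Rightarrow> (nat \<Rightarrow> int) monoid" where
  "D1 p m = product_group {..<m} (\<lambda>_. integer_mod_group p)"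

definition D2 :: "nat \<Rightarrow> nat \<Rightarrow> (nat \<Rightarrow> int) monoid" where
  "D2 p m = product_group {..<m - 1}
     (\<lambda>i. if i = 0 then integer_mod_group (p ^ 2) else integer_mod_group p)"

text \<open>The input is a group G with carrier a finite set of naturals together with an
  enumeration es of its elements; the algorithm accesses the elements one at a time
  in that order (query Next, answer None once all elements were accessed), and may
  query the Cayley table on the i-th and j-th elements it has accessed
  (query Mult i j). Every query counts as one access.\<close>
datatype query = Next | Mult nat nat

datatype action = Ask query | Decide bool

type_synonym history = "(query \<times> nat option) list"

type_synonym algorithm = "history \<Rightarrow> action"

definition accessed :: "history \<Rightarrow> nat list" where
  "accessed h = [a. (q, Some a) \<leftarrow> h, q = Next]"

fun answer :: "nat monoid \<Rightarrow> nat list \<Rightarrow> history \<Rightarrow> query \<Rightarrow> nat option" where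
  "answer G es h Next =
     (let k = length (accessed h) in if k < length es then Some (es ! k) else None)"
| "answer G es h (Mult i j) =
     (let acc = accessed h in
      if i < length acc \<and> j < length acc then Some (acc ! i \<otimes>\<^bsub>G\<^esub> acc ! j) else None)"

primrec hist :: "algorithm \<Rightarrow> nat monoid \<Rightarrow> nat list \<Rightarrow> nat \<Rightarrow> history" where
  "hist A G es 0 = []"
| "hist A G es (Suc k) =
     (case A (hist A G es k) of
        Ask q \<Rightarrow> hist A G es k @ [(q, answer G es (hist A G es k) q)]
      | Decide b \<Rightarrow> hist A G es k)"

definition decides :: "algorithm \<Rightarrow> nat monoid \<Rightarrow> nat list \<Rightarrow> nat \<Rightarrow> bool \<Rightarrow> bool" where
  "decides A G es k b \<longleftrightarrow>
     (\<forall>i<k. \<exists>q. A (hist A G es i) = Ask q) \<and> A (hist A G es k) = Decide b"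

definition valid_input :: "nat monoid \<Rightarrow> nat list \<Rightarrow> bool" where
  "valid_input G es \<longleftrightarrow> group G \<and> distinct es \<and> set es = carrier G"

end

theory Submission
  imports Defs "HOL-Library.Countable"
begin


definition transp :: "('a \<Rightarrow> nat) \<Rightarrow> 'a monoid \<Rightarrow> nat monoid" where
 "transp f D = \<lparr>carrier = f ` carrier D,
    monoid.mult = (\<lambda>a b. f (inv_into (carrier D) f a \<otimes>\<^bsub>D\<^esub> inv_into (carrier D) f b)),
    one = f \<one>\<^bsub>D\<^esub>\<rparr>"

lemma transp_mult:
  assumes "inj_on f (carrier D)" "x \<in> carrier D" "y \<in> carrier D"
  shows "f x \<otimes>\<^bsub>transp f D\<^esub> f y = f (x \<otimes>\<^bsub>D\<^esub> y)"
  using assms by (simp add: transp_def inv_into_f_f)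

lemma transp_iso:
  assumes "group D" "inj_on f (carrier D)"
  shows "f \<in> iso D (transp f D)"
  using assms by (auto simp: iso_def hom_def bij_betw_def transp_mult) (auto simp: transp_def)

lemma transp_group:
  assumes "group D" "inj_on f (carrier D)"
  shows "group (transp f D)"
proof -
  interpret group D by fact
  have m: "monoid (transp f D)"
  proof (rule monoidI)
    fix a b assume "a \<in> carrier (transp f D)" "b \<in> carrier (transp f D)"
    then obtain x y where "x \<in> carrier D" "y \<in> carrier D" "a = f x" "b = f y"
      by (auto simp: transp_def)
    then show "a \<otimes>\<^bsub>transp f D\<^esub> b \<in> carrier (transp f D)"
      using assms by (simp add: transp_mult) (simp add: transp_def)
  next
    show "\<one>\<^bsub>transp f D\<^esub> \<in> carrier (transp f D)" by (simp add: transp_def)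
  next
    fix a b c assume "a \<in> carrier (transp f D)" "b \<in> carrier (transp f D)" "c \<in> carrier (transp f D)"
    then obtain x y z where "x \<in> carrier D" "y \<in> carrier D" "z \<in> carrier D" "a = f x" "b = f y" "c = f z"
      by (auto simp: transp_def)
    then show "a \<otimes>\<^bsub>transp f D\<^esub> b \<otimes>\<^bsub>transp f D\<^esub> c = a \<otimes>\<^bsub>transp f D\<^esub> (b \<otimes>\<^bsub>transp f D\<^esub> c)"
      using assms by (simp add: transp_mult m_assoc)
  next
    fix a assume "a \<in> carrier (transp f D)"
    then obtain x where "x \<in> carrier D" "a = f x" by (auto simp: transp_def)
    then show "\<one>\<^bsub>transp f D\<^esub> \<otimes>\<^bsub>transp f D\<^esub> a = a" "a \<otimes>\<^bsub>transp f D\<^esub> \<one>\<^bsub>transp f D\<^esub> = a"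
      using assms transp_mult[of f D \<open>\<one>\<^bsub>D\<^esub>\<close> x] transp_mult[of f D x \<open>\<one>\<^bsub>D\<^esub>\<close>]
      by (auto simp: transp_def[of f D, symmetric]) (simp_all add: transp_def)
  qed
  have "D \<cong> transp f D" using transp_iso[OF assms] by (rule is_isoI)
  then show ?thesis using m by (rule iso_imp_group)
qed

lemma accessed_snoc:
  "accessed (h @ [(q, r)]) = accessed h @ (if q = Next then (case r of Some a \<Rightarrow> [a] | None \<Rightarrow> []) else [])"
  by (cases r) (auto simp: accessed_def)

lemma accessed_take: "\<exists>n\<le>i. accessed (hist A G es i) = take n es"
proof (induction i)
  case 0 then show ?case by (simp add: accessed_def)
next
  case (Suc i)
  then obtain n where n: "n \<le> i" "accessed (hist A G es i) = take n es" by blast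
  show ?case
  proof (cases "A (hist A G es i)")
    case (Ask q)
    show ?thesis
    proof (cases q)
      case Next
      show ?thesis
      proof (cases "n < length es")
        case True
        then show ?thesis using n Ask Next
          by (intro exI[of _ "Suc n"]) (simp add: accessed_snoc take_Suc_conv_app_nth)
      next
        case False
        then show ?thesis using n Ask Next
          by (intro exI[of _ n]) (simp add: accessed_snoc)
      qed
    next
      case (Mult a b)
      then show ?thesis using n Ask by (intro exI[of _ n]) (simp add: accessed_snoc)
    qed
  next
    case (Decide b)
    then show ?thesis using n by (intro exI[of _ n]) simp
  qed
qed

lemma hist_agree:
  assumes "take N es1 = take N es2" "N \<le> length es1" "N \<le> length es2"
    "\<And>a b. a \<in> set (take N es1) \<Longrightarrow> b \<in> set (take N es1) \<Longrightarrow> a \<otimes>\<^bsub>G1\<^esub> b = a \<otimes>\<^bsub>G2\<^esub> b"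
  shows "i \<le> N \<Longrightarrow> hist A G1 es1 i = hist A G2 es2 i"
proof (induction i)
  case 0 then show ?case by simp
next
  case (Suc i)
  then have IH: "hist A G1 es1 i = hist A G2 es2 i" by simp
  obtain n where n: "n \<le> i" "accessed (hist A G1 es1 i) = take n es1" using accessed_take by blast
  have nN: "n < N" using n Suc by simp
  have sub: "set (take n es1) \<subseteq> set (take N es1)" using nN by (simp add: set_take_subset_set_take)
  have ans: "answer G1 es1 (hist A G1 es1 i) q = answer G2 es2 (hist A G1 es1 i) q" for q
  proof (cases q)
    case Next
    have "es1 ! n = es2 ! n" using assms(1) nN by (metis nth_take)
    then show ?thesis using Next n nN assms(2,3) by (simp add: Let_def)
  next
    case (Mult a b)
    have mem: "j < n \<Longrightarrow> j < length es1 \<Longrightarrow> es1 ! j \<in> set (take N es1)" for j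
      using sub by (metis length_take min_less_iff_conj nth_mem nth_take subsetD)
    show ?thesis using Mult n mem assms(4) by (auto simp: Let_def)
  qed
  show ?case
  proof (cases "A (hist A G1 es1 i)")
    case (Ask q)
    then show ?thesis using IH ans[of q] by simp
  next
    case (Decide b)
    then show ?thesis using IH by simp
  qed
qed

lemma pow_product_group:
  "x \<in> carrier (product_group I G) \<Longrightarrow>
   x [^]\<^bsub>product_group I G\<^esub> (n::nat) = (\<lambda>i\<in>I. x i [^]\<^bsub>G i\<^esub> n)"
  by (induction n) (auto simp: PiE_iff intro!: restrict_ext)



definition f1 :: "nat \<Rightarrow> (nat \<Rightarrow> int) \<Rightarrow> nat" where
  "f1 m x = to_nat (map x [0..<m])"
definition f2 :: "nat \<Rightarrow> (nat \<Rightarrow> int) \<Rightarrow> nat" where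
  "f2 m x = to_nat (map x [0..<m-1] @ [0::int])"
definition H1 :: "nat \<Rightarrow> nat \<Rightarrow> (nat \<Rightarrow> int) set" where
  "H1 p m = {x \<in> carrier (D1 p m). x 0 = 0 \<and> x (m-1) = 0}"

lemma group_D1: "group (D1 p m)" by (simp add: D1_def)
lemma group_D2: "group (D2 p m)" by (simp add: D2_def)

lemma carrier_D1: "p > 0 \<Longrightarrow> carrier (D1 p m) = (\<Pi>\<^sub>E i\<in>{..<m}. {0..<int p})"
  by (simp add: D1_def carrier_integer_mod_group)

lemma carrier_D2: "p > 0 \<Longrightarrow> carrier (D2 p m) =
   (\<Pi>\<^sub>E i\<in>{..<m-1}. if i = 0 then {0..<int (p^2)} else {0..<int p})"
  unfolding D2_def carrier_product_group by (rule PiE_cong) (auto simp: carrier_integer_mod_group)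

lemma mult_D1: "x \<otimes>\<^bsub>D1 p m\<^esub> y = (\<lambda>i\<in>{..<m}. (x i + y i) mod int p)"
  by (simp add: D1_def)

lemma mult_D2: "x \<otimes>\<^bsub>D2 p m\<^esub> y =
   (\<lambda>i\<in>{..<m-1}. if i = 0 then (x i + y i) mod int (p^2) else (x i + y i) mod int p)"
  unfolding D2_def mult_product_group by (rule restrict_ext) simp

lemma inj_f1: "inj_on (f1 m) (extensional {..<m})"
proof (rule inj_onI)
  fix x y assume x: "x \<in> extensional {..<m}" and y: "y \<in> extensional {..<m}" and "f1 m x = f1 m y"
  then have "map x [0..<m] = map y [0..<m]" by (simp add: f1_def)
  then have "\<forall>i<m. x i = y i" by (simp add: map_eq_conv)
  then show "x = y" using x y by (intro extensionalityI[of _ "{..<m}"]) auto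
qed

lemma inj_f2: "inj_on (f2 m) (extensional {..<m-1})"
proof (rule inj_onI)
  fix x y assume x: "x \<in> extensional {..<m-1}" and y: "y \<in> extensional {..<m-1}" and "f2 m x = f2 m y"
  then have "map x [0..<m-1] = map y [0..<m-1]" by (simp add: f2_def)
  then have "\<forall>i<m-1. x i = y i" by (simp add: map_eq_conv)
  then show "x = y" using x y by (intro extensionalityI[of _ "{..<m-1}"]) auto
qed

lemma inj_f1_D1: "p > 0 \<Longrightarrow> inj_on (f1 m) (carrier (D1 p m))"
  by (rule inj_on_subset[OF inj_f1]) (auto simp: carrier_D1 PiE_def)

lemma inj_f2_D2: "p > 0 \<Longrightarrow> inj_on (f2 m) (carrier (D2 p m))"
  by (rule inj_on_subset[OF inj_f2]) (auto simp: carrier_D2 PiE_def)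

lemma finite_D1: "p > 0 \<Longrightarrow> finite (carrier (D1 p m))"
  by (simp add: carrier_D1 finite_PiE)

lemma finite_D2: "p > 0 \<Longrightarrow> finite (carrier (D2 p m))"
  by (simp add: carrier_D2 finite_PiE)

lemma f1_f2:
  assumes "m \<ge> 1" "x (m-1) = 0"
  shows "f1 m x = f2 m (restrict x {..<m-1})"
proof -
  have "[0..<m] = [0..<m-1] @ [m-1]" using assms
    by (metis Suc_diff_1 less_eq_Suc_le upt_Suc_append zero_le One_nat_def)
  then show ?thesis using assms by (simp add: f1_def f2_def)
qed

lemma H1_D2:
  assumes "p > 0" "x \<in> H1 p m"
  shows "restrict x {..<m-1} \<in> carrier (D2 p m)"
proof -
  have "int p \<le> int (p^2)" using assms by (simp add: power2_eq_square)
  then show ?thesis using assms by (auto simp: H1_def carrier_D1 carrier_D2 PiE_iff)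
qed

lemma mult_agree:
  assumes "p > 0" "m \<ge> 1" "x \<in> H1 p m" "y \<in> H1 p m"
  shows "f1 m (x \<otimes>\<^bsub>D1 p m\<^esub> y) = f2 m (restrict x {..<m-1} \<otimes>\<^bsub>D2 p m\<^esub> restrict y {..<m-1})"
proof -
  have "f1 m (x \<otimes>\<^bsub>D1 p m\<^esub> y) = f2 m (restrict (x \<otimes>\<^bsub>D1 p m\<^esub> y) {..<m-1})"
    using assms by (intro f1_f2) (auto simp: mult_D1 H1_def)
  also have "restrict (x \<otimes>\<^bsub>D1 p m\<^esub> y) {..<m-1} =
      restrict x {..<m-1} \<otimes>\<^bsub>D2 p m\<^esub> restrict y {..<m-1}"
    using assms by (auto simp: mult_D1 mult_D2 H1_def restrict_def fun_eq_iff)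
  finally show ?thesis .
qed



lemma card_H1:
  assumes "p > 0" "m \<ge> 2"
  shows "p ^ (m-2) \<le> card (H1 p m)"
proof -
  define P where "P = (\<Pi>\<^sub>E i\<in>{..<m-2}. {0..<int p})"
  define g where "g = (\<lambda>y::nat\<Rightarrow>int. \<lambda>i\<in>{..<m}. if 1 \<le> i \<and> i \<le> m-2 then y (i-1) else 0)"
  have cardP: "card P = p ^ (m-2)" by (simp add: P_def card_PiE)
  have sub: "g ` P \<subseteq> H1 p m"
  proof
    fix z assume "z \<in> g ` P"
    then obtain y where y: "y \<in> P" and z: "z = g y" by blast
    have yv: "\<And>j. j < m-2 \<Longrightarrow> y j \<in> {0..<int p}" using y by (simp add: P_def PiE_iff)
    have "z \<in> (\<Pi>\<^sub>E i\<in>{..<m}. {0..<int p})"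
    proof (rule PiE_I)
      fix i assume i: "i \<in> {..<m}"
      show "z i \<in> {0..<int p}"
      proof (cases "1 \<le> i \<and> i \<le> m-2")
        case True
        then have "i - 1 < m - 2" using assms by linarith
        then show ?thesis using True i yv[of "i-1"] by (simp add: z g_def)
      next
        case False
        then show ?thesis using i assms by (auto simp: z g_def)
      qed
    next
      fix i assume "i \<notin> {..<m}" then show "z i = undefined" by (simp add: z g_def)
    qed
    moreover have "z 0 = 0" using assms by (simp add: z g_def)
    moreover have "z (m-1) = 0"
    proof -
      have "\<not> (m - 1 \<le> m - 2)" using assms by linarith
      then show ?thesis using assms by (simp add: z g_def)
    qed
    ultimately show "z \<in> H1 p m" using assms by (simp add: H1_def carrier_D1)
  qed
  have inj: "inj_on g P"
  proof (rule inj_onI)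
    fix y z assume y: "y \<in> P" and z: "z \<in> P" and e: "g y = g z"
    have "y j = z j" if "j < m-2" for j
    proof -
      have "g y (j+1) = g z (j+1)" using e by simp
      moreover have "Suc j < m" "Suc j \<le> m - 2" using that by linarith+
      ultimately show ?thesis by (simp add: g_def)
    qed
    then show "y = z" using y z by (intro extensionalityI[of _ "{..<m-2}"]) (auto simp: P_def PiE_def)
  qed
  have fin: "finite (H1 p m)" using finite_D1[OF assms(1)] by (rule finite_subset[rotated]) (auto simp: H1_def)
  have "card P = card (g ` P)" using inj by (simp add: card_image)
  also have "\<dots> \<le> card (H1 p m)" using sub fin by (rule card_mono[rotated])
  finally show ?thesis using cardP by simp
qed

lemma D1_pow: "x \<in> carrier (D1 p m) \<Longrightarrow> x [^]\<^bsub>D1 p m\<^esub> p = \<one>\<^bsub>D1 p m\<^esub>"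
  unfolding D1_def by (simp add: pow_product_group)

lemma not_iso:
  assumes "p > 1" "m \<ge> 2"
  shows "\<not> (D2 p m \<cong> D1 p m)"
proof
  assume "D2 p m \<cong> D1 p m"
  then obtain h where h: "h \<in> iso (D2 p m) (D1 p m)" by (auto simp: is_iso_def)
  define e where "e = (\<lambda>i\<in>{..<m-1}. if i = 0 then (1::int) else 0)"
  have pp: "p < p^2" using assms by (simp add: power2_eq_square)
  have e: "e \<in> carrier (D2 p m)" using assms pp by (auto simp: carrier_D2 e_def)
  have hom: "h \<in> hom (D2 p m) (D1 p m)" using h by (simp add: iso_def)
  have he: "h e \<in> carrier (D1 p m)" using hom e by (auto simp: hom_def)
  have "h (e [^]\<^bsub>D2 p m\<^esub> p) = h e [^]\<^bsub>D1 p m\<^esub> p"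
    using hom e group_D1 group_D2 by (simp add: hom_nat_pow)
  also have "\<dots> = \<one>\<^bsub>D1 p m\<^esub>" using he by (rule D1_pow)
  also have "\<dots> = h \<one>\<^bsub>D2 p m\<^esub>"
  proof -
    have "group_hom (D2 p m) (D1 p m) h" by (simp add: group_hom_def group_hom_axioms_def hom group_D1 group_D2)
    then show ?thesis by (rule group_hom.hom_one[symmetric])
  qed
  finally have eq: "h (e [^]\<^bsub>D2 p m\<^esub> p) = h \<one>\<^bsub>D2 p m\<^esub>" .
  have inj: "inj_on h (carrier (D2 p m))" using h by (simp add: iso_def bij_betw_def)
  have "e [^]\<^bsub>D2 p m\<^esub> p = \<one>\<^bsub>D2 p m\<^esub>"
  proof (rule inj_onD[OF inj])
    show "h (e [^]\<^bsub>D2 p m\<^esub> p) = h \<one>\<^bsub>D2 p m\<^esub>" by (rule eq)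
    show "e [^]\<^bsub>D2 p m\<^esub> p \<in> carrier (D2 p m)" using e group_D2 by (simp add: group.is_monoid monoid.nat_pow_closed)
    show "\<one>\<^bsub>D2 p m\<^esub> \<in> carrier (D2 p m)" using group_D2 by (simp add: group.is_monoid monoid.one_closed)
  qed
  then have "(e [^]\<^bsub>D2 p m\<^esub> p) 0 = (\<one>\<^bsub>D2 p m\<^esub>) 0" by simp
  moreover have "(e [^]\<^bsub>D2 p m\<^esub> p) 0 = int p"
  proof -
    have "e \<in> carrier (product_group {..<m-1} (\<lambda>i. if i = 0 then integer_mod_group (p ^ 2) else integer_mod_group p))"
      using e by (simp add: D2_def)
    then show ?thesis using assms pp unfolding D2_def
      by (simp add: pow_product_group e_def)
  qed
  moreover have "(\<one>\<^bsub>D2 p m\<^esub>) 0 = 0" using assms by (simp add: D2_def)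
  ultimately show False using assms by simp
qed



theorem mainTheorem16:
  "\<exists>c::real. c > 0 \<and>
    (\<forall>(p::nat) (m::nat) (A::algorithm).
       Factorial_Ring.prime p \<longrightarrow> 3 \<le> m \<longrightarrow>
       (\<forall>G es. valid_input G es \<and> (G \<cong> D1 p m \<or> G \<cong> D2 p m) \<longrightarrow>
           (\<exists>k. decides A G es k (G \<cong> D1 p m))) \<longrightarrow>
       (\<exists>G es k b. valid_input G es \<and> (G \<cong> D1 p m \<or> G \<cong> D2 p m) \<and>
           decides A G es k b \<and> real k \<ge> c * real p ^ (m - 2)))"
proof (rule exI[of _ 1], intro conjI allI impI)
  fix p m :: nat and A :: algorithm
  assume prime: "Factorial_Ring.prime p" and m3: "3 \<le> m"
    and corr: "\<forall>G es. valid_input G es \<and> (G \<cong> D1 p m \<or> G \<cong> D2 p m) \<longrightarrow>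
           (\<exists>k. decides A G es k (G \<cong> D1 p m))"
  have p1: "p > 1" using prime prime_gt_1_nat by blast
  then have p0: "p > 0" by simp
  define G1 where "G1 = transp (f1 m) (D1 p m)"
  define G2 where "G2 = transp (f2 m) (D2 p m)"
  define S where "S = f1 m ` H1 p m"
  define L where "L = sorted_list_of_set S"
  define es1 where "es1 = L @ sorted_list_of_set (carrier G1 - S)"
  define es2 where "es2 = L @ sorted_list_of_set (carrier G2 - S)"
  define N where "N = length L"
  have iso1: "f1 m \<in> iso (D1 p m) G1" unfolding G1_def by (rule transp_iso[OF group_D1 inj_f1_D1[OF p0]])
  have iso2: "f2 m \<in> iso (D2 p m) G2" unfolding G2_def by (rule transp_iso[OF group_D2 inj_f2_D2[OF p0]])
  have grp1: "group G1" unfolding G1_def by (rule transp_group[OF group_D1 inj_f1_D1[OF p0]])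
  have grp2: "group G2" unfolding G2_def by (rule transp_group[OF group_D2 inj_f2_D2[OF p0]])
  have G1D1: "G1 \<cong> D1 p m" using iso1 by (intro group.iso_sym[OF group_D1] is_isoI)
  have G2D2: "G2 \<cong> D2 p m" using iso2 by (intro group.iso_sym[OF group_D2] is_isoI)
  have nG2D1: "\<not> G2 \<cong> D1 p m"
  proof
    assume "G2 \<cong> D1 p m"
    moreover have "D2 p m \<cong> G2" using iso2 by (rule is_isoI)
    ultimately have "D2 p m \<cong> D1 p m" using iso_trans by blast
    then show False using not_iso[OF p1] m3 by simp
  qed
  have car1: "carrier G1 = f1 m ` carrier (D1 p m)" by (simp add: G1_def transp_def)
  have car2: "carrier G2 = f2 m ` carrier (D2 p m)" by (simp add: G2_def transp_def)
  have S1: "S \<subseteq> carrier G1" by (auto simp: S_def car1 H1_def)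
  have S2: "S \<subseteq> carrier G2"
  proof
    fix a assume "a \<in> S"
    then obtain x where x: "x \<in> H1 p m" "a = f1 m x" by (auto simp: S_def)
    have "a = f2 m (restrict x {..<m-1})" using x m3 by (simp add: f1_f2 H1_def)
    then show "a \<in> carrier G2" using H1_D2[OF p0 x(1)] by (simp add: car2)
  qed
  have fin1: "finite (carrier G1)" using finite_D1[OF p0] by (simp add: car1)
  have fin2: "finite (carrier G2)" using finite_D2[OF p0] by (simp add: car2)
  have finS: "finite S" using S1 fin1 by (rule finite_subset)
  have v1: "valid_input G1 es1"
    using grp1 S1 fin1 finS by (auto simp: valid_input_def es1_def L_def)
  have v2: "valid_input G2 es2"
    using grp2 S2 fin2 finS by (auto simp: valid_input_def es2_def L_def)
  have t1: "take N es1 = L" by (simp add: N_def es1_def)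
  have t2: "take N es2 = L" by (simp add: N_def es2_def)
  have setL: "set L = S" using finS by (simp add: L_def)
  have agree: "a \<otimes>\<^bsub>G1\<^esub> b = a \<otimes>\<^bsub>G2\<^esub> b" if "a \<in> set (take N es1)" "b \<in> set (take N es1)" for a b
  proof -
    from that obtain x y where x: "x \<in> H1 p m" "a = f1 m x" and y: "y \<in> H1 p m" "b = f1 m y"
      by (auto simp: t1 setL S_def)
    have xc: "x \<in> carrier (D1 p m)" "y \<in> carrier (D1 p m)" using x y by (auto simp: H1_def)
    have a2: "a = f2 m (restrict x {..<m-1})" "b = f2 m (restrict y {..<m-1})"
      using x y m3 by (simp_all add: f1_f2 H1_def)
    have "a \<otimes>\<^bsub>G1\<^esub> b = f1 m (x \<otimes>\<^bsub>D1 p m\<^esub> y)"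
      unfolding G1_def x(2) y(2) by (rule transp_mult[OF inj_f1_D1[OF p0] xc])
    also have "\<dots> = f2 m (restrict x {..<m-1} \<otimes>\<^bsub>D2 p m\<^esub> restrict y {..<m-1})"
      using p0 m3 x y by (intro mult_agree) auto
    also have "\<dots> = a \<otimes>\<^bsub>G2\<^esub> b"
      unfolding G2_def a2 by (rule transp_mult[OF inj_f2_D2[OF p0] H1_D2[OF p0 x(1)] H1_D2[OF p0 y(1)], symmetric])
    finally show ?thesis .
  qed
  have h: "hist A G1 es1 i = hist A G2 es2 i" if "i \<le> N" for i
    by (rule hist_agree[of N es1 es2 G1 G2, OF _ _ _ agree that]) (auto simp: t1 t2 es1_def es2_def N_def)
  obtain k1 where k1: "decides A G1 es1 k1 True" using corr v1 G1D1 by fastforce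
  obtain k2 where k2: "decides A G2 es2 k2 False" using corr v2 G2D2 nG2D1 by fastforce
  have "N \<le> k1"
  proof (rule ccontr)
    assume "\<not> N \<le> k1"
    then have lt: "k1 < N" by simp
    have d1: "A (hist A G2 es2 k1) = Decide True" using k1 h[of k1] lt by (simp add: decides_def)
    have a1: "\<And>i. i < k1 \<Longrightarrow> \<exists>q. A (hist A G2 es2 i) = Ask q" using k1 h lt by (simp add: decides_def)
    show False
    proof (cases k2 k1 rule: linorder_cases)
      case less then show ?thesis using a1[of k2] k2 by (auto simp: decides_def)
    next
      case equal then show ?thesis using d1 k2 by (simp add: decides_def)
    next
      case greater then show ?thesis using d1 k2 by (auto simp: decides_def)
    qed
  qed
  moreover have "card S = card (H1 p m)" unfolding S_def
    by (rule card_image, rule inj_on_subset[OF inj_f1_D1[OF p0]]) (auto simp: H1_def)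
  moreover have "N = card S" using finS by (simp add: N_def L_def)
  moreover have "p ^ (m-2) \<le> card (H1 p m)" using card_H1[OF p0] m3 by simp
  ultimately have "p ^ (m-2) \<le> k1" by linarith
  then have "real p ^ (m-2) \<le> real k1" by (metis of_nat_le_iff of_nat_power)
  then show "\<exists>G es k b. valid_input G es \<and> (G \<cong> D1 p m \<or> G \<cong> D2 p m) \<and>
           decides A G es k b \<and> real k \<ge> 1 * real p ^ (m - 2)"
    using v1 G1D1 k1 by auto
qed simp

end
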